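(* Let $T>0$ and consider single-stage allocations $(T(1),T(0))$ with $T(1),T(0)>0$ and $T(1)+T(0)=T$. For standard deviations $\sigma(1),\sigma(0)\ge 0$, not both zero, let $$V(T(1),T(0))=\frac{\sigma^2(1)}{T(1)}+\frac{\sigma^2(0)}{T(0)},\qquad V(T^*(1),T^*(0))=\frac{(\sigma(1)+\sigma(0))^2}{T}.$$ Then the optimal solution of $$\inf_{T(1),T(0)}\ \sup_{\sigma(1),\sigma(0)}\ \frac{V(T(1),T(0))}{V(T^*(1),T^*(0))}$$ is $T(1)=T(0)=T/2$. Moreover, $$\sup_{\sigma(1),\sigma(0)}\frac{V(T/2,T/2)}{V(T^*(1),T^*(0))}=2,$$ and this supremum is attained when either $\sigma(1)=0$ or $\sigma(0)=0$.
   Context: $\sigma(1),\sigma(0)$ are the standard deviations of the treated and control potential outcomes $Y(1),Y(0)$. $(T^*(1),T^*(0))=\big(\tfrac{\sigma(1)}{\sigma(1)+\sigma(0)}T,\tfrac{\sigma(0)}{\sigma(1)+\sigma(0)}T\big)$ is the Neyman allocation, which minimizes $V$ over allocations summing to $T$; its value is $(\sigma(1)+\sigma(0))^2/T$. The quantity $V$ is the variance of the difference-in-means estimator under a completely randomized experiment with $T(1)$ treated and $T(0)$ control subjects drawn from a super-population. *)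

theory Defs
  imports Complex_Main
begin

text \<open>Variance of difference-in-means with T1 treated and T0 control units.\<close>
definition V :: "real \<Rightarrow> real \<Rightarrow> real \<Rightarrow> real \<Rightarrow> real" where
  "V s1 s0 T1 T0 = s1^2 / T1 + s0^2 / T0"

text \<open>Variance under the Neyman allocation, total sample size T.\<close>
definition Vstar :: "real \<Rightarrow> real \<Rightarrow> real \<Rightarrow> real" where
  "Vstar s1 s0 T = (s1 + s0)^2 / T"

definition sigmas :: "(real \<times> real) set" where
  "sigmas = {(s1, s0). s1 \<ge> 0 \<and> s0 \<ge> 0 \<and> \<not> (s1 = 0 \<and> s0 = 0)}"

definition allocs :: "real \<Rightarrow> (real \<times> real) set" where
  "allocs T = {(T1, T0). T1 > 0 \<and> T0 > 0 \<and> T1 + T0 = T}"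

definition ratio :: "real \<Rightarrow> real \<Rightarrow> real \<Rightarrow> real \<Rightarrow> real \<Rightarrow> real" where
  "ratio T T1 T0 s1 s0 = V s1 s0 T1 T0 / Vstar s1 s0 T"

definition worst :: "real \<Rightarrow> real \<Rightarrow> real \<Rightarrow> real" where
  "worst T T1 T0 = (SUP p\<in>sigmas. ratio T T1 T0 (fst p) (snd p))"

end

theory Submission
  imports Defs
begin

lemma ratio_bound:
  fixes T T1 T0 s1 s0 :: real
  assumes T1: "T1 > 0" and T0: "T0 > 0" and T: "T > 0"
    and s: "s1 \<ge> 0" "s0 \<ge> 0" "\<not> (s1 = 0 \<and> s0 = 0)"
  shows "ratio T T1 T0 s1 s0 \<le> max (T/T1) (T/T0)"
proof -
  define M where "M = max (T/T1) (T/T0)"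
  have pos: "(s1 + s0)^2 > 0" using s by (smt (verit) zero_less_power)
  have M0: "M \<ge> 0" using T T1 unfolding M_def by (simp add: le_max_iff_disj)
  have a: "s1^2 / T1 * T \<le> M * s1^2"
  proof -
    have "s1^2 / T1 * T = (T/T1) * s1^2" by simp
    also have "\<dots> \<le> M * s1^2" unfolding M_def by (intro mult_right_mono) auto
    finally show ?thesis .
  qed
  have b: "s0^2 / T0 * T \<le> M * s0^2"
  proof -
    have "s0^2 / T0 * T = (T/T0) * s0^2" by simp
    also have "\<dots> \<le> M * s0^2" unfolding M_def by (intro mult_right_mono) auto
    finally show ?thesis .
  qed
  have c: "M * (s1^2 + s0^2) \<le> M * (s1 + s0)^2"
  proof (rule mult_left_mono[OF _ M0])
    have "0 \<le> 2 * s1 * s0" using s by simp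
    then show "s1^2 + s0^2 \<le> (s1 + s0)^2" unfolding power2_sum by linarith
  qed
  have "V s1 s0 T1 T0 * T = s1^2 / T1 * T + s0^2 / T0 * T"
    unfolding V_def by (rule distrib_right)
  also have "\<dots> \<le> M * s1^2 + M * s0^2" using a b by linarith
  also have "\<dots> = M * (s1^2 + s0^2)" by (rule distrib_left[symmetric])
  also have "\<dots> \<le> M * (s1 + s0)^2" by (rule c)
  finally have "V s1 s0 T1 T0 * T \<le> M * (s1 + s0)^2" .
  then have "V s1 s0 T1 T0 * T / (s1 + s0)^2 \<le> M"
    using pos by (simp add: divide_le_eq)
  moreover have "ratio T T1 T0 s1 s0 = V s1 s0 T1 T0 * T / (s1 + s0)^2"
    unfolding ratio_def Vstar_def by (rule divide_divide_eq_right)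
  ultimately show ?thesis unfolding M_def by simp
qed

lemma worst_eq:
  fixes T T1 T0 :: real
  assumes T1: "T1 > 0" and T0: "T0 > 0" and T: "T > 0"
  shows "worst T T1 T0 = max (T/T1) (T/T0)"
  unfolding worst_def
proof (rule cSup_eq_maximum)
  have r10: "ratio T T1 T0 1 0 = T/T1" unfolding ratio_def V_def Vstar_def by simp
  have r01: "ratio T T1 T0 0 1 = T/T0" unfolding ratio_def V_def Vstar_def by simp
  have "(1::real,0::real) \<in> sigmas" "(0::real,1::real) \<in> sigmas" unfolding sigmas_def by auto
  then show "max (T/T1) (T/T0) \<in> (\<lambda>p. ratio T T1 T0 (fst p) (snd p)) ` sigmas"
    using r10 r01 by (cases "T/T1 \<le> T/T0") (force simp: max_def)+
next
  fix x assume "x \<in> (\<lambda>p. ratio T T1 T0 (fst p) (snd p)) ` sigmas"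
  then show "x \<le> max (T/T1) (T/T0)"
    using ratio_bound[OF T1 T0 T] unfolding sigmas_def by auto
qed

lemma max_gt:
  fixes T T1 T0 :: real
  assumes "T1 > 0" "T0 > 0" "T > 0" "T1 + T0 = T" "T1 \<noteq> T/2"
  shows "max (T/T1) (T/T0) > 2"
proof (cases "T1 < T/2")
  case True
  then have "T/T1 > 2" using assms by (simp add: less_divide_eq)
  then show ?thesis by simp
next
  case False
  then have "T0 < T/2" using assms by simp
  then have "T/T0 > 2" using assms by (simp add: less_divide_eq)
  then show ?thesis by simp
qed

theorem theorem1:
  fixes T :: real
  assumes "T > 0"
  shows "(T/2, T/2) \<in> allocs T
    \<and> (\<forall>(T1, T0)\<in>allocs T. worst T (T/2) (T/2) \<le> worst T T1 T0)
    \<and> (\<forall>(T1, T0)\<in>allocs T. worst T T1 T0 \<le> worst T (T/2) (T/2) \<longrightarrow> T1 = T/2 \<and> T0 = T/2)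
    \<and> worst T (T/2) (T/2) = 2
    \<and> (\<forall>(s1, s0)\<in>sigmas. (s1 = 0 \<or> s0 = 0) \<longrightarrow> ratio T (T/2) (T/2) s1 s0 = 2)"
proof -
  have w2: "worst T (T/2) (T/2) = 2" using worst_eq[of "T/2" "T/2" T] assms by simp
  have A: "(T/2, T/2) \<in> allocs T" using assms unfolding allocs_def by auto
  have key: "2 \<le> worst T T1 T0 \<and> (worst T T1 T0 \<le> 2 \<longrightarrow> T1 = T/2 \<and> T0 = T/2)"
    if h: "(T1, T0) \<in> allocs T" for T1 T0
  proof -
    from h have h1: "0 < T1" "0 < T0" "T1 + T0 = T" unfolding allocs_def by auto
    have we: "worst T T1 T0 = max (T/T1) (T/T0)" using worst_eq[OF h1(1,2) assms] .
    show ?thesis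
    proof (cases "T1 = T/2")
      case True
      then have "T0 = T/2" using h1 by linarith
      then have "worst T T1 T0 = max (T/(T/2)) (T/(T/2))" using True we by (simp only:)
      also have "\<dots> = 2" using assms by simp
      finally have w2e: "worst T T1 T0 = 2" .
      then show ?thesis using w2e True \<open>T0 = T/2\<close> by auto
    next
      case False
      then have "worst T T1 T0 > 2" using we max_gt[OF h1(1,2) assms h1(3)] by simp
      then show ?thesis by simp
    qed
  qed
  have B: "\<forall>(T1, T0)\<in>allocs T. worst T (T/2) (T/2) \<le> worst T T1 T0"
    using key w2 by auto
  have C: "\<forall>(T1, T0)\<in>allocs T. worst T T1 T0 \<le> worst T (T/2) (T/2) \<longrightarrow> T1 = T/2 \<and> T0 = T/2"
    using key w2 by auto
  have D: "\<forall>(s1, s0)\<in>sigmas. (s1 = 0 \<or> s0 = 0) \<longrightarrow> ratio T (T/2) (T/2) s1 s0 = 2"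
  proof -
    have "ratio T (T/2) (T/2) s1 s0 = 2"
      if h: "0 \<le> s1" "0 \<le> s0" "\<not> (s1 = 0 \<and> s0 = 0)" "s1 = 0 \<or> s0 = 0" for s1 s0
    proof (cases "s1 = 0")
      case True
      then have "s0 \<noteq> 0" using h by auto
      then show ?thesis using True assms unfolding ratio_def V_def Vstar_def
        by (simp add: field_simps power2_eq_square)
    next
      case False
      then have "s0 = 0" using h by auto
      then show ?thesis using False assms unfolding ratio_def V_def Vstar_def
        by (simp add: field_simps power2_eq_square)
    qed
    note R = this
    show ?thesis
    proof (intro ballI)
      fix p assume p: "p \<in> sigmas"
      obtain a b where ab: "p = (a, b)" by (cases p)
      have "0 \<le> a" "0 \<le> b" "\<not> (a = 0 \<and> b = 0)" using p ab unfolding sigmas_def by auto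
      then show "case p of (s1, s0) \<Rightarrow> (s1 = 0 \<or> s0 = 0) \<longrightarrow> ratio T (T/2) (T/2) s1 s0 = 2"
        using R[of a b] ab by (simp only: prod.case) blast
    qed
  qed
  show ?thesis by (intro conjI A B C D w2)
qed

end
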